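(* Let $\Lambda$ be a lattice and $B\subset\Lambda$ a finite subset. Then $B$ has an integral decomposition $B=\bigcup_i B_i$ in which every $B_i$ is irreducible, and this decomposition is unique up to the order of the factors.
   Context: A lattice is a free abelian group of finite rank. For a subset $A\subseteq\Lambda$, $\langle A\rangle_{\mathbb Z}$ denotes the subgroup generated by $A$ and $\langle A\rangle_{\mathbb C}$ the complex subspace of $\Lambda\otimes_{\mathbb Z}\mathbb C$ it spans. The completion of a subgroup $\Delta\subseteq\Lambda$ is $\overline{\Delta}=\langle\Delta\rangle_{\mathbb C}\cap\Lambda$. An integral decomposition of a finite set $B\subset\Lambda$ is a partition $B=\bigcup_i B_i$ (into nonempty parts) such that $\overline{\langle B\rangle_{\mathbb Z}}=\bigoplus_i\overline{\langle B_i\rangle_{\mathbb Z}}$ (internal direct sum). $B$ is irreducible if it has no nontrivial integral decomposition. *)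

theory Defs
  imports "HOL-Analysis.Analysis"
begin

text \<open>The lattice Lambda is modelled as int^n (n an arbitrary finite index type);
  Lambda tensor C is then complex^n.\<close>

definition zspan :: "(int ^ 'n) set \<Rightarrow> (int ^ 'n) set" where
  "zspan A = module.span (*s) A"

definition cembed :: "int ^ 'n \<Rightarrow> complex ^ 'n" where
  "cembed x = (\<chi> i. of_int (x $ i))"

definition cspan :: "(int ^ 'n) set \<Rightarrow> (complex ^ 'n) set" where
  "cspan A = module.span (*s) (cembed ` A)"

definition completion :: "(int ^ 'n) set \<Rightarrow> (int ^ 'n) set" where
  "completion D = {x. cembed x \<in> cspan D}"

definition is_partition :: "(int ^ 'n) set \<Rightarrow> (int ^ 'n) set set \<Rightarrow> bool" where
  "is_partition B P \<longleftrightarrow> \<Union>P = B \<and> {} \<notin> P \<and>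
     (\<forall>C\<in>P. \<forall>D\<in>P. C \<noteq> D \<longrightarrow> C \<inter> D = {})"

definition internal_direct_sum ::
  "(int ^ 'n) set \<Rightarrow> 'i set \<Rightarrow> ('i \<Rightarrow> (int ^ 'n) set) \<Rightarrow> bool" where
  "internal_direct_sum L P D \<longleftrightarrow>
     L = {(\<Sum>C\<in>P. f C) | f. \<forall>C\<in>P. f C \<in> D C} \<and>
     (\<forall>f. (\<forall>C\<in>P. f C \<in> D C) \<and> (\<Sum>C\<in>P. f C) = 0 \<longrightarrow> (\<forall>C\<in>P. f C = 0))"

definition integral_decomposition :: "(int ^ 'n) set \<Rightarrow> (int ^ 'n) set set \<Rightarrow> bool" where
  "integral_decomposition B P \<longleftrightarrow> is_partition B P \<and>
     internal_direct_sum (completion (zspan B)) P (\<lambda>C. completion (zspan C))"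

definition irreducible_set :: "(int ^ 'n) set \<Rightarrow> bool" where
  "irreducible_set B \<longleftrightarrow> (\<forall>P. integral_decomposition B P \<longrightarrow> card P \<le> 1)"

end

theory Submission
  imports Defs
begin

interpretation ivec: module "(*s) :: int \<Rightarrow> int^'n \<Rightarrow> int^'n"
  by standard (simp_all add: vec_eq_iff algebra_simps)

lemma zspan_eq: "zspan A = ivec.span A" unfolding zspan_def by simp

lemma cembed_add: "cembed (x + y) = cembed x + cembed y"
  by (simp add: cembed_def vec_eq_iff)
lemma cembed_zero[simp]: "cembed 0 = 0"
  by (simp add: cembed_def vec_eq_iff)
lemma cembed_scale: "cembed (k *s x) = (of_int k :: complex) *s cembed x"
  by (simp add: cembed_def vec_eq_iff)
lemma cembed_inj: "cembed x = cembed y \<longleftrightarrow> x = y"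
  by (simp add: cembed_def vec_eq_iff)
lemma cembed_sum: "cembed (sum f A) = (\<Sum>a\<in>A. cembed (f a))"
  by (induction A rule: infinite_finite_induct) (auto simp: cembed_add)
lemma cembed_diff: "cembed (x - y) = cembed x - cembed y"
  by (simp add: cembed_def vec_eq_iff)

definition Lc :: "(int ^ 'n) set \<Rightarrow> (int ^ 'n) set" where
  "Lc C = {x. cembed x \<in> vec.span (cembed ` C)}"

lemma cembed_zspan: "x \<in> zspan C \<Longrightarrow> cembed x \<in> vec.span (cembed ` C)"
  unfolding zspan_eq
proof (induction rule: ivec.span_induct_alt)
  case base then show ?case by (simp add: vec.span_zero)
next
  case (step c x y)
  then show ?case
    by (simp add: cembed_add cembed_scale vec.span_add vec.span_scale vec.span_base)
qed

lemma completion_Lc: "completion (zspan C) = Lc C"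
proof -
  have "vec.span (cembed ` zspan C) = vec.span (cembed ` C)"
  proof
    show "vec.span (cembed ` zspan C) \<subseteq> vec.span (cembed ` C)"
      using cembed_zspan by (intro vec.span_minimal) (auto simp: vec.subspace_span)
    show "vec.span (cembed ` C) \<subseteq> vec.span (cembed ` zspan C)"
      by (intro vec.span_mono image_mono) (simp add: zspan_eq ivec.span_superset)
  qed
  then show ?thesis unfolding completion_def Lc_def cspan_def by simp
qed

lemma Lc_zero[simp]: "0 \<in> Lc C" by (simp add: Lc_def vec.span_zero)
lemma Lc_add: "x \<in> Lc C \<Longrightarrow> y \<in> Lc C \<Longrightarrow> x + y \<in> Lc C"
  by (simp add: Lc_def cembed_add vec.span_add)
lemma Lc_diff: "x \<in> Lc C \<Longrightarrow> y \<in> Lc C \<Longrightarrow> x - y \<in> Lc C"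
  by (simp add: Lc_def cembed_diff vec.span_diff)
lemma Lc_scale: "x \<in> Lc C \<Longrightarrow> k *s x \<in> Lc C"
  by (simp add: Lc_def cembed_scale vec.span_scale)
lemma Lc_sum: "(\<And>a. a \<in> A \<Longrightarrow> f a \<in> Lc C) \<Longrightarrow> sum f A \<in> Lc C"
  by (induction A rule: infinite_finite_induct) (auto simp: Lc_add)
lemma Lc_mono: "C \<subseteq> D \<Longrightarrow> Lc C \<subseteq> Lc D"
  unfolding Lc_def using vec.span_mono[of "cembed ` C" "cembed ` D"] by auto
lemma Lc_empty: "Lc {} = {0}"
  by (auto simp: Lc_def cembed_inj[of _ 0, simplified])
lemma zspan_Lc: "zspan C \<subseteq> Lc C"
  using cembed_zspan by (auto simp: Lc_def)
lemma Lc_unscale: assumes "m \<noteq> 0" "m *s x \<in> Lc C" shows "x \<in> Lc C"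
proof -
  have "(inverse (of_int m :: complex)) *s ((of_int m :: complex) *s cembed x) \<in> vec.span (cembed ` C)"
    apply (rule vec.span_scale) using assms(2) by (simp add: Lc_def cembed_scale)
  moreover have "(inverse (of_int m :: complex)) *s ((of_int m :: complex) *s cembed x) = cembed x"
    using assms(1) by (simp add: vec.scale_scale)
  ultimately show ?thesis by (simp add: Lc_def)
qed

definition qscale :: "rat \<Rightarrow> complex \<Rightarrow> complex" where
  "qscale r z = of_rat r * z"

interpretation qv: vector_space qscale
  by standard (simp_all add: qscale_def algebra_simps of_rat_add of_rat_mult)

interpretation qvp: vector_space_pair qscale qscale ..

lemma exists_qproj:
  "\<exists>g::complex\<Rightarrow>complex. (\<forall>a b. g (a + b) = g a + g b) \<and> (\<forall>r z. g (of_rat r * z) = of_rat r * g z)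
      \<and> g 1 = 1 \<and> (\<forall>z. g z \<in> \<rat>)"
proof -
  have ind: "qv.independent {1::complex}"
    using qv.independent_insertI[of 1 "{}"] qv.span_empty by (simp add: qv.independent_empty)
  obtain g where lin: "Vector_Spaces.linear qscale qscale g" and g1: "\<forall>x\<in>{1}. g x = id x"
    and rg: "range g = qv.span (id ` {1})"
    using qvp.linear_independent_extend_subspace[OF ind, of id] by blast
  have "\<forall>z. g z \<in> \<rat>"
  proof
    fix z
    have "g z \<in> qv.span {1}" using rg by auto
    then show "g z \<in> \<rat>" by (auto simp: qv.span_singleton qscale_def Rats_def)
  qed
  moreover have "\<forall>a b. g (a + b) = g a + g b" "\<forall>r z. g (of_rat r * z) = of_rat r * g z"
    using lin unfolding Vector_Spaces.linear_iff qscale_def by auto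
  ultimately show ?thesis using g1 by auto
qed

lemma common_denom:
  fixes S :: "complex set"
  assumes "finite S" "S \<subseteq> \<rat>"
  shows "\<exists>m::int. m > 0 \<and> (\<forall>s\<in>S. of_int m * s \<in> \<int>)"
  using assms
proof (induction S rule: finite_induct)
  case empty then show ?case by (intro exI[of _ 1]) auto
next
  case (insert q S)
  then obtain m :: int where m: "m > 0" "\<forall>s\<in>S. of_int m * s \<in> \<int>" by auto
  obtain a b :: int where ab: "b > 0" "q = of_int a / of_int b"
    using insert(4) Rats_cases' by (metis insert_subset)
  have "of_int (m * b) * q = of_int (m * a)" using ab by simp
  moreover have "of_int (m * b) * s \<in> \<int>" if "s \<in> S" for s
  proof -
    have "of_int (m * b) * s = of_int b * (of_int m * s)" by simp
    then show ?thesis using m(2) that by (metis Ints_mult Ints_of_int)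
  qed
  ultimately have "\<forall>s\<in>insert q S. of_int (m * b) * s \<in> \<int>"
    by (metis Ints_of_int insert_iff)
  moreover have "m * b > 0" using m(1) ab(1) by simp
  ultimately show ?case by blast
qed


lemma Lc_rational:
  assumes fin: "finite C" and x: "x \<in> Lc C"
  shows "\<exists>m::int. m > 0 \<and> m *s x \<in> zspan C"
proof -
  obtain g :: "complex \<Rightarrow> complex" where gadd: "\<And>a b. g (a + b) = g a + g b"
    and gsc: "\<And>r z. g (of_rat r * z) = of_rat r * g z" and g1: "g 1 = 1"
    and gQ: "\<And>z. g z \<in> \<rat>"
    using exists_qproj by blast
  have gint: "g (of_int k * z) = of_int k * g z" for k z
    using gsc[of "of_int k" z] by simp
  have g0: "g 0 = 0" using gadd[of 0 0] by simp
  have gsum: "g (sum f A) = (\<Sum>a\<in>A. g (f a))" for f :: "'b \<Rightarrow> complex" and A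
    by (induction A rule: infinite_finite_induct) (auto simp: g0 gadd)
  have "cembed x \<in> vec.span (cembed ` C)" using x by (simp add: Lc_def)
  then obtain u where u: "cembed x = (\<Sum>v\<in>cembed ` C. u v *s v)"
    using vec.span_finite[OF finite_imageI[OF fin]] by auto
  define a where "a c = u (cembed c)" for c
  have inj: "inj_on cembed C" by (auto simp: inj_on_def cembed_inj)
  have xa: "cembed x = (\<Sum>c\<in>C. a c *s cembed c)"
    using u by (simp add: sum.reindex[OF inj] a_def)
  have comp: "of_int (x $ i) = (\<Sum>c\<in>C. a c * of_int (c $ i))" for i
  proof -
    have "cembed x $ i = (\<Sum>c\<in>C. a c *s cembed c) $ i" using xa by simp
    then show ?thesis by (simp add: cembed_def)
  qed
  obtain m :: int where m: "m > 0" "\<forall>s\<in>(\<lambda>c. g (a c)) ` C. of_int m * s \<in> \<int>"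
    using common_denom[of "(\<lambda>c. g (a c)) ` C"] fin gQ by auto
  define k where "k c = (SOME k. (of_int k :: complex) = of_int m * g (a c))" for c
  have k: "(of_int (k c) :: complex) = of_int m * g (a c)" if "c \<in> C" for c
  proof -
    have "of_int m * g (a c) \<in> \<int>" using m(2) that by auto
    then obtain j where "of_int m * g (a c) = (of_int j :: complex)" by (auto elim: Ints_cases)
    then show ?thesis unfolding k_def by (metis (mono_tags, lifting) someI_ex)
  qed
  have compi: "m * x $ i = (\<Sum>c\<in>C. k c * c $ i)" for i
  proof -
    have "(of_int (x $ i) :: complex) = g (of_int (x $ i) * 1)" using gint[of "x $ i" 1] g1 by simp
    also have "\<dots> = g (\<Sum>c\<in>C. of_int (c $ i) * a c)" using comp[of i] by (simp add: mult.commute)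
    also have "\<dots> = (\<Sum>c\<in>C. of_int (c $ i) * g (a c))" by (simp add: gsum gint)
    finally have "(of_int (m * x $ i) :: complex) = of_int m * (\<Sum>c\<in>C. of_int (c $ i) * g (a c))"
      by simp
    also have "\<dots> = (\<Sum>c\<in>C. of_int (c $ i) * (of_int m * g (a c)))"
      by (simp add: sum_distrib_left algebra_simps)
    also have "\<dots> = (\<Sum>c\<in>C. of_int (c $ i) * of_int (k c))"
      by (intro sum.cong) (auto simp: k)
    also have "\<dots> = of_int (\<Sum>c\<in>C. k c * c $ i)" by (simp add: mult.commute)
    finally show ?thesis by (simp only: of_int_eq_iff)
  qed
  have "m *s x = (\<Sum>c\<in>C. k c *s c)"
    by (simp add: vec_eq_iff compi)
  also have "\<dots> \<in> zspan C"
    unfolding zspan_eq by (intro ivec.span_sum ivec.span_scale ivec.span_base)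
  finally show ?thesis using m(1) by blast
qed


lemma dec_iff: "integral_decomposition B P \<longleftrightarrow> is_partition B P \<and>
   Lc B = {(\<Sum>C\<in>P. f C) | f. \<forall>C\<in>P. f C \<in> Lc C} \<and>
   (\<forall>f. (\<forall>C\<in>P. f C \<in> Lc C) \<and> (\<Sum>C\<in>P. f C) = 0 \<longrightarrow> (\<forall>C\<in>P. f C = 0))"
  unfolding integral_decomposition_def internal_direct_sum_def completion_Lc ..

lemma zspan_repr: "finite C \<Longrightarrow> y \<in> zspan C \<Longrightarrow> \<exists>k. y = (\<Sum>c\<in>C. k c *s c)"
  unfolding zspan_eq using ivec.span_finite by auto

lemma partition_finite: "finite B \<Longrightarrow> is_partition B P \<Longrightarrow> finite P"
  unfolding is_partition_def by (metis Sup_le_iff finite_Pow_iff finite_subset subsetI PowI)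

lemma dec_restrict:
  assumes fin: "finite B" and dQ: "integral_decomposition B Q" and CB: "C \<subseteq> B"
  shows "integral_decomposition C {C \<inter> D | D. D \<in> Q \<and> C \<inter> D \<noteq> {}}"
proof -
  have part: "\<Union>Q = B" "{} \<notin> Q" "\<And>D D'. D\<in>Q \<Longrightarrow> D'\<in>Q \<Longrightarrow> D\<noteq>D' \<Longrightarrow> D\<inter>D'={}"
    using dQ unfolding dec_iff is_partition_def by auto
  have sumQ: "Lc B = {(\<Sum>C\<in>Q. f C) | f. \<forall>C\<in>Q. f C \<in> Lc C}"
    and indQ: "\<And>f. (\<forall>C\<in>Q. f C \<in> Lc C) \<Longrightarrow> (\<Sum>C\<in>Q. f C) = 0 \<Longrightarrow> (\<forall>C\<in>Q. f C = 0)"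
    using dQ unfolding dec_iff by auto
  have finQ: "finite Q" using partition_finite[OF fin] dQ unfolding dec_iff by auto
  have finC: "finite C" using fin CB finite_subset by auto
  define Q' where "Q' = {D\<in>Q. C\<inter>D \<noteq> {}}"
  define R where "R = (\<lambda>D. C\<inter>D) ` Q'"
  have Req: "{C \<inter> D | D. D \<in> Q \<and> C \<inter> D \<noteq> {}} = R" by (auto simp: R_def Q'_def)
  have inj: "inj_on (\<lambda>D. C\<inter>D) Q'"
  proof (rule inj_onI)
    fix D D' assume "D \<in> Q'" "D' \<in> Q'" "C \<inter> D = C \<inter> D'"
    then show "D = D'" using part(3)[of D D'] unfolding Q'_def by blast
  qed
  have finQ': "finite Q'" using finQ by (simp add: Q'_def)
  have key: "\<forall>D\<in>Q. f D \<in> Lc (C \<inter> D)"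
    if x: "x \<in> Lc C" and f: "\<forall>D\<in>Q. f D \<in> Lc D" and xf: "x = (\<Sum>D\<in>Q. f D)" for x f
  proof -
    obtain m :: int where m: "m > 0" "m *s x \<in> zspan C" using Lc_rational[OF finC x] by blast
    then obtain k where k: "m *s x = (\<Sum>c\<in>C. k c *s c)" using zspan_repr[OF finC] by blast
    define h where "h D = (\<Sum>c\<in>C\<inter>D. k c *s c)" for D
    have "(\<Sum>D\<in>Q. h D) = (\<Sum>c\<in>\<Union>((\<lambda>D. C\<inter>D) ` Q). k c *s c)"
      unfolding h_def using finQ finC part(3)
      by (intro sum.UNION_disjoint[symmetric]) auto
    also have "\<Union>((\<lambda>D. C\<inter>D) ` Q) = C" using part(1) CB by auto
    finally have hs: "(\<Sum>D\<in>Q. h D) = m *s x" using k by simp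
    have hz: "h D \<in> zspan (C \<inter> D)" for D
      unfolding h_def zspan_eq by (intro ivec.span_sum ivec.span_scale ivec.span_base)
    have hL: "h D \<in> Lc D" for D using hz zspan_Lc Lc_mono[of "C\<inter>D" D] by blast
    have "\<forall>D\<in>Q. m *s f D - h D = 0"
    proof (rule indQ)
      show "\<forall>D\<in>Q. m *s f D - h D \<in> Lc D" using f hL by (simp add: Lc_diff Lc_scale)
      show "(\<Sum>D\<in>Q. m *s f D - h D) = 0"
        by (simp add: sum_subtractf hs xf ivec.scale_sum_right[symmetric])
    qed
    then have "\<forall>D\<in>Q. m *s f D \<in> Lc (C \<inter> D)" using hz zspan_Lc by auto
    then show ?thesis using m(1) Lc_unscale[of m] by auto
  qed
  have "is_partition C R"
    unfolding is_partition_def R_def Q'_def using part CB by blast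
  moreover have "Lc C = {(\<Sum>E\<in>R. f E) | f. \<forall>E\<in>R. f E \<in> Lc E}"
  proof
    show "Lc C \<subseteq> {(\<Sum>E\<in>R. f E) | f. \<forall>E\<in>R. f E \<in> Lc E}"
    proof
      fix x assume x: "x \<in> Lc C"
      then have "x \<in> Lc B" using Lc_mono[OF CB] by auto
      then obtain f where f: "\<forall>D\<in>Q. f D \<in> Lc D" and xf: "x = (\<Sum>D\<in>Q. f D)"
        using sumQ by auto
      have fC: "\<forall>D\<in>Q. f D \<in> Lc (C \<inter> D)" using key[OF x f xf] .
      have z: "\<forall>D\<in>Q - Q'. f D = 0"
      proof
        fix D assume "D \<in> Q - Q'"
        then have "f D \<in> Lc {}" using fC by (auto simp: Q'_def)
        then show "f D = 0" using Lc_empty by auto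
      qed
      have "x = (\<Sum>D\<in>Q'. f D)"
        unfolding xf using z
        by (intro sum.mono_neutral_right finQ) (auto simp: Q'_def)
      define hh where "hh E = f (inv_into Q' (\<lambda>D. C\<inter>D) E)" for E
      have "(\<Sum>E\<in>R. hh E) = (\<Sum>D\<in>Q'. hh (C \<inter> D))"
        unfolding R_def by (simp add: sum.reindex[OF inj])
      also have "\<dots> = (\<Sum>D\<in>Q'. f D)"
        by (intro sum.cong) (auto simp: hh_def inv_into_f_f[OF inj])
      finally have "x = (\<Sum>E\<in>R. hh E)" using \<open>x = (\<Sum>D\<in>Q'. f D)\<close> by simp
      moreover have "\<forall>E\<in>R. hh E \<in> Lc E"
      proof
        fix E assume "E \<in> R"
        then obtain D where D: "D \<in> Q'" "E = C \<inter> D" by (auto simp: R_def)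
        then have "hh E = f D" by (simp add: hh_def inv_into_f_f[OF inj])
        then show "hh E \<in> Lc E" using fC D by (auto simp: Q'_def)
      qed
      ultimately show "x \<in> {(\<Sum>E\<in>R. f E) | f. \<forall>E\<in>R. f E \<in> Lc E}" by blast
    qed
    show "{(\<Sum>E\<in>R. f E) | f. \<forall>E\<in>R. f E \<in> Lc E} \<subseteq> Lc C"
    proof clarify
      fix f assume "\<forall>E\<in>R. f E \<in> Lc E"
      moreover have "\<forall>E\<in>R. Lc E \<subseteq> Lc C" using Lc_mono[of "C \<inter> _" C] by (auto simp: R_def)
      ultimately show "(\<Sum>E\<in>R. f E) \<in> Lc C" by (intro Lc_sum) auto
    qed
  qed
  moreover have "\<forall>E\<in>R. hh E = 0" if hh: "\<forall>E\<in>R. hh E \<in> Lc E" and s: "(\<Sum>E\<in>R. hh E) = 0" for hh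
  proof -
    define f where "f D = (if D \<in> Q' then hh (C \<inter> D) else 0)" for D
    have "\<forall>D\<in>Q. f D \<in> Lc D"
    proof
      fix D assume "D \<in> Q"
      show "f D \<in> Lc D"
      proof (cases "D \<in> Q'")
        case True
        then have "f D \<in> Lc (C \<inter> D)" using hh by (auto simp: f_def R_def)
        then show ?thesis using Lc_mono[of "C \<inter> D" D] by auto
      qed (simp add: f_def)
    qed
    moreover have "(\<Sum>D\<in>Q. f D) = 0"
    proof -
      have "(\<Sum>D\<in>Q. f D) = (\<Sum>D\<in>Q'. f D)"
        by (intro sum.mono_neutral_right finQ) (auto simp: Q'_def f_def)
      also have "\<dots> = (\<Sum>D\<in>Q'. hh (C \<inter> D))" by (simp add: f_def)
      also have "\<dots> = (\<Sum>E\<in>R. hh E)" unfolding R_def by (simp add: sum.reindex[OF inj])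
      finally show ?thesis using s by simp
    qed
    ultimately have "\<forall>D\<in>Q. f D = 0" using indQ by blast
    then show ?thesis unfolding R_def f_def Q'_def by (auto split: if_splits)
  qed
  ultimately show ?thesis unfolding dec_iff Req by blast
qed


lemma dec_part: "integral_decomposition B P \<Longrightarrow>
   \<Union>P = B \<and> {} \<notin> P \<and> (\<forall>C\<in>P. \<forall>D\<in>P. C \<noteq> D \<longrightarrow> C \<inter> D = {})"
  unfolding integral_decomposition_def is_partition_def by simp

lemma irr_sub:
  assumes fin: "finite B" and dP: "integral_decomposition B P" and dQ: "integral_decomposition B Q"
    and irr: "\<forall>C\<in>P. irreducible_set C" and C: "C \<in> P"
  shows "\<exists>D\<in>Q. C \<subseteq> D"
proof -
  have CB: "C \<subseteq> B" and Cne: "C \<noteq> {}" using dec_part[OF dP] C by auto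
  define R where "R = {C \<inter> D | D. D \<in> Q \<and> C \<inter> D \<noteq> {}}"
  have dR: "integral_decomposition C R" unfolding R_def by (rule dec_restrict[OF fin dQ CB])
  then have "card R \<le> 1" using irr C unfolding irreducible_set_def by simp
  moreover have "\<Union>R = C" using dec_part[OF dR] by simp
  moreover have "finite R"
  proof (rule finite_subset)
    show "R \<subseteq> Pow C" using \<open>\<Union>R = C\<close> by auto
    show "finite (Pow C)" using fin CB finite_subset by auto
  qed
  moreover have "R \<noteq> {}" using \<open>\<Union>R = C\<close> Cne by auto
  ultimately have "card R = 1" by (simp add: le_Suc_eq card_eq_0_iff)
  then obtain E where "R = {E}" by (rule card_1_singletonE)
  then have "E = C" "E \<in> R" using \<open>\<Union>R = C\<close> by auto
  then show ?thesis unfolding R_def by auto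
qed

lemma uniq:
  assumes fin: "finite B" and dP: "integral_decomposition B P" and dQ: "integral_decomposition B Q"
    and irrP: "\<forall>C\<in>P. irreducible_set C" and irrQ: "\<forall>C\<in>Q. irreducible_set C"
  shows "P \<subseteq> Q"
proof
  fix C assume C: "C \<in> P"
  obtain D where D: "D \<in> Q" "C \<subseteq> D" using irr_sub[OF fin dP dQ irrP C] by blast
  obtain C' where C': "C' \<in> P" "D \<subseteq> C'" using irr_sub[OF fin dQ dP irrQ D(1)] by blast
  have "C \<noteq> {}" using dec_part[OF dP] C by auto
  moreover have "C \<subseteq> C'" using C' D by auto
  ultimately have "C = C'" using dec_part[OF dP] C C'(1) by (metis inf.absorb1)
  then have "C = D" using D C' by auto
  then show "C \<in> Q" using D by simp
qed


lemma dec_refine: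
  assumes fin: "finite B" and dP: "integral_decomposition B P" and C: "C \<in> P"
    and dQ: "integral_decomposition C Q"
  shows "integral_decomposition B ((P - {C}) \<union> Q)"
    and "card ((P - {C}) \<union> Q) = card P - 1 + card Q"
proof -
  have partP: "\<Union>P = B" "{} \<notin> P" "\<And>D D'. D\<in>P \<Longrightarrow> D'\<in>P \<Longrightarrow> D\<noteq>D' \<Longrightarrow> D\<inter>D'={}"
    using dec_part[OF dP] by auto
  have partQ: "\<Union>Q = C" "{} \<notin> Q" "\<And>D D'. D\<in>Q \<Longrightarrow> D'\<in>Q \<Longrightarrow> D\<noteq>D' \<Longrightarrow> D\<inter>D'={}"
    using dec_part[OF dQ] by auto
  have sumP: "Lc B = {(\<Sum>C\<in>P. f C) | f. \<forall>C\<in>P. f C \<in> Lc C}"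
    and indP: "\<And>f. (\<forall>C\<in>P. f C \<in> Lc C) \<Longrightarrow> (\<Sum>C\<in>P. f C) = 0 \<Longrightarrow> (\<forall>C\<in>P. f C = 0)"
    using dP unfolding dec_iff by auto
  have sumQ: "Lc C = {(\<Sum>C\<in>Q. f C) | f. \<forall>C\<in>Q. f C \<in> Lc C}"
    and indQ: "\<And>f. (\<forall>C\<in>Q. f C \<in> Lc C) \<Longrightarrow> (\<Sum>C\<in>Q. f C) = 0 \<Longrightarrow> (\<forall>C\<in>Q. f C = 0)"
    using dQ unfolding dec_iff by auto
  have CB: "C \<subseteq> B" using partP C by auto
  have finP: "finite P" using partition_finite[OF fin] dP unfolding integral_decomposition_def by simp
  have finC: "finite C" using fin CB finite_subset by auto
  have finQ: "finite Q" using partition_finite[OF finC] dQ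
    unfolding integral_decomposition_def by simp
  have disj: "(P - {C}) \<inter> Q = {}"
  proof (rule ccontr)
    assume "(P - {C}) \<inter> Q \<noteq> {}"
    then obtain E where E: "E \<in> P" "E \<noteq> C" "E \<in> Q" by blast
    then have "E \<subseteq> C" "E \<noteq> {}" using partQ by auto
    moreover have "E \<inter> C = {}" using partP(3)[OF E(1) C E(2)] .
    ultimately show False by auto
  qed
  show "card ((P - {C}) \<union> Q) = card P - 1 + card Q"
    using card_Un_disjoint[OF _ finQ disj] finP C by (simp add: card_Diff_singleton)
  define N where "N = (P - {C}) \<union> Q"
  have sumN: "(\<Sum>E\<in>N. h E) = (\<Sum>E\<in>P - {C}. h E) + (\<Sum>E\<in>Q. h E)" for h
    unfolding N_def using finP finQ disj by (simp add: sum.union_disjoint)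
  have sumPC: "(\<Sum>E\<in>P. h E) = h C + (\<Sum>E\<in>P - {C}. h E)" for h
    using finP C by (simp add: sum.remove)
  have subB: "E \<subseteq> B" if "E \<in> N" for E using that partP partQ CB by (auto simp: N_def)
  have "is_partition B N"
    unfolding is_partition_def N_def
  proof (intro conjI ballI impI)
    show "\<Union>(P - {C} \<union> Q) = B" using partP partQ C by auto
    show "{} \<notin> P - {C} \<union> Q" using partP partQ by auto
    fix D D' assume D: "D \<in> P - {C} \<union> Q" and D': "D' \<in> P - {C} \<union> Q" and ne: "D \<noteq> D'"
    show "D \<inter> D' = {}"
    proof (cases "D \<in> Q")
      case True
      show ?thesis
      proof (cases "D' \<in> Q")
        case True then show ?thesis using partQ(3) \<open>D \<in> Q\<close> ne by auto
      next
        case False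
        then have "D' \<in> P" "D' \<noteq> C" using D' by auto
        then have "D' \<inter> C = {}" using partP(3) C by auto
        then show ?thesis using \<open>D \<in> Q\<close> partQ(1) by auto
      qed
    next
      case False
      then have DP: "D \<in> P" "D \<noteq> C" using D by auto
      show ?thesis
      proof (cases "D' \<in> Q")
        case True
        have "D \<inter> C = {}" using partP(3) C DP by auto
        then show ?thesis using True partQ(1) by auto
      next
        case False
        then show ?thesis using partP(3) DP D' ne by auto
      qed
    qed
  qed
  moreover have "Lc B = {(\<Sum>E\<in>N. h E) | h. \<forall>E\<in>N. h E \<in> Lc E}"
  proof
    show "Lc B \<subseteq> {(\<Sum>E\<in>N. h E) | h. \<forall>E\<in>N. h E \<in> Lc E}"
    proof
      fix x assume "x \<in> Lc B"
      then obtain f where f: "\<forall>D\<in>P. f D \<in> Lc D" and xf: "x = (\<Sum>D\<in>P. f D)" using sumP by auto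
      then have "f C \<in> Lc C" using C by auto
      then obtain g where g: "\<forall>D\<in>Q. g D \<in> Lc D" and fg: "f C = (\<Sum>D\<in>Q. g D)" using sumQ by auto
      define h where "h E = (if E \<in> Q then g E else f E)" for E
      have h1: "(\<Sum>E\<in>P - {C}. h E) = (\<Sum>E\<in>P - {C}. f E)"
      proof (rule sum.cong)
        fix E assume "E \<in> P - {C}"
        then have "E \<notin> Q" using disj by blast
        then show "h E = f E" by (simp add: h_def)
      qed simp
      have h2: "(\<Sum>E\<in>Q. h E) = (\<Sum>E\<in>Q. g E)" by (simp add: h_def)
      have "(\<Sum>E\<in>N. h E) = (\<Sum>E\<in>P - {C}. f E) + (\<Sum>E\<in>Q. g E)"
        unfolding sumN h1 h2 ..
      also have "\<dots> = x" unfolding xf sumPC fg by simp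
      finally have "x = (\<Sum>E\<in>N. h E)" by simp
      moreover have "\<forall>E\<in>N. h E \<in> Lc E" using f g by (auto simp: h_def N_def)
      ultimately show "x \<in> {(\<Sum>E\<in>N. h E) | h. \<forall>E\<in>N. h E \<in> Lc E}" by (intro CollectI exI[of _ h]) simp
    qed
    show "{(\<Sum>E\<in>N. h E) | h. \<forall>E\<in>N. h E \<in> Lc E} \<subseteq> Lc B"
    proof clarify
      fix h assume h: "\<forall>E\<in>N. h E \<in> Lc E"
      show "(\<Sum>E\<in>N. h E) \<in> Lc B"
      proof (rule Lc_sum)
        fix E assume "E \<in> N"
        then show "h E \<in> Lc B" using h subB[of E] Lc_mono[of E B] by blast
      qed
    qed
  qed
  moreover have "\<forall>E\<in>N. h E = 0" if h: "\<forall>E\<in>N. h E \<in> Lc E" and s: "(\<Sum>E\<in>N. h E) = 0" for h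
  proof -
    define f where "f D = (if D = C then (\<Sum>E\<in>Q. h E) else h D)" for D
    have "\<forall>E\<in>Q. h E \<in> Lc C"
    proof
      fix E assume E: "E \<in> Q"
      then have "h E \<in> Lc E" using h by (auto simp: N_def)
      moreover have "E \<subseteq> C" using partQ(1) E by auto
      ultimately show "h E \<in> Lc C" using Lc_mono[of E C] by blast
    qed
    then have "\<forall>D\<in>P. f D \<in> Lc D"
      using h by (auto simp: f_def N_def intro!: Lc_sum)
    moreover have "(\<Sum>D\<in>P. f D) = 0"
    proof -
      have "(\<Sum>D\<in>P. f D) = (\<Sum>E\<in>Q. h E) + (\<Sum>D\<in>P - {C}. h D)"
        unfolding sumPC by (auto simp: f_def intro!: sum.cong)
      also have "\<dots> = (\<Sum>E\<in>N. h E)" unfolding sumN by simp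
      finally show ?thesis using s by simp
    qed
    ultimately have f0: "\<forall>D\<in>P. f D = 0" using indP by blast
    then have "f C = 0" using C by blast
    then have "(\<Sum>E\<in>Q. h E) = 0" by (simp add: f_def)
    then have "\<forall>E\<in>Q. h E = 0" using indQ h by (auto simp: N_def)
    moreover have "\<forall>E\<in>P - {C}. h E = 0"
    proof
      fix E assume "E \<in> P - {C}"
      then have "f E = 0" "E \<noteq> C" using f0 by auto
      then show "h E = 0" by (simp add: f_def)
    qed
    ultimately show ?thesis by (auto simp: N_def)
  qed
  ultimately have "integral_decomposition B N"
    unfolding dec_iff by blast
  then show "integral_decomposition B ((P - {C}) \<union> Q)" by (simp add: N_def)
qed


lemma dec_trivial: "integral_decomposition B (if B = {} then {} else {B})"
proof (cases "B = {}")
  case True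
  then show ?thesis unfolding dec_iff is_partition_def by (simp add: Lc_empty)
next
  case False
  then show ?thesis unfolding dec_iff is_partition_def by auto
qed

lemma dec_card_le: "integral_decomposition B Q \<Longrightarrow> finite B \<Longrightarrow> card Q < 2 ^ card B + 1"
proof -
  assume d: "integral_decomposition B Q" and fin: "finite B"
  have "Q \<subseteq> Pow B" using dec_part[OF d] by auto
  then have "card Q \<le> card (Pow B)" using fin by (intro card_mono) auto
  then show ?thesis using fin by (simp add: card_Pow)
qed

lemma exists_irr:
  assumes fin: "finite B"
  shows "\<exists>P. integral_decomposition B P \<and> (\<forall>C\<in>P. irreducible_set C)"
proof -
  obtain P where dP: "integral_decomposition B P"
    and maxP: "\<forall>Q. integral_decomposition B Q \<longrightarrow> card Q \<le> card P"
    using Lattices_Big.ex_has_greatest_nat[of "integral_decomposition B" "if B = {} then {} else {B}"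
        card "2 ^ card B + 1"] dec_trivial dec_card_le fin by blast
  have "irreducible_set C" if C: "C \<in> P" for C
  proof (rule ccontr)
    assume "\<not> irreducible_set C"
    then obtain Q where dQ: "integral_decomposition C Q" and cQ: "\<not> card Q \<le> 1"
      unfolding irreducible_set_def by blast
    have finP: "finite P" using partition_finite[OF fin] dP unfolding integral_decomposition_def by simp
    have "card P \<ge> 1" using C finP by (metis One_nat_def Suc_leI card_gt_0_iff empty_iff)
    then have "card ((P - {C}) \<union> Q) > card P" using dec_refine(2)[OF fin dP C dQ] cQ by simp
    moreover have "card ((P - {C}) \<union> Q) \<le> card P" using maxP dec_refine(1)[OF fin dP C dQ] by blast
    ultimately show False by simp
  qed
  then show ?thesis using dP by blast
qed

theorem lemma3p4:
  fixes B :: "(int ^ 'n) set"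
  assumes "finite B"
  shows "\<exists>!P. integral_decomposition B P \<and> (\<forall>C\<in>P. irreducible_set C)"
proof -
  obtain P where P: "integral_decomposition B P" "\<forall>C\<in>P. irreducible_set C"
    using exists_irr[OF assms] by blast
  show ?thesis
  proof (rule ex1I[of _ P])
    show "integral_decomposition B P \<and> (\<forall>C\<in>P. irreducible_set C)" using P by blast
    fix Q assume Q: "integral_decomposition B Q \<and> (\<forall>C\<in>Q. irreducible_set C)"
    show "Q = P"
      using uniq[OF assms P(1) _ P(2)] uniq[OF assms _ P(1) _ P(2)] Q by blast
  qed
qed

end
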